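(* Let $V$ be a finite totally ordered set and let $w$ be a derangement of $V$. Then the number $f(w)$ of simple graphs $G$ with vertex set $V$ such that $w \in \mathcal{D}(G)$ is $$f(w) = 2^{\binom{|V|}{2} - \sum_{t \in U(w)} |\rho_w(t)|} \cdot \prod_{t \in U(w)} \left(2^{|\rho_w(t)|} - 1\right) = 2^{\binom{|V|}{2}} \cdot \prod_{t \in U(w)} \left(1 - \frac{1}{2^{|\rho_w(t)|}}\right),$$ and consequently $r(w) = f(w)/2^{\binom{|V|}{2}} = \prod_{t \in U(w)} \left(1 - 2^{-|\rho_w(t)|}\right)$.
   Context: A derangement of $V$ is a fixed-point-free permutation of $V$. For a permutation $w$ of $V$ and $t \in V$, define $\rho_w(t) = \{t, w(t), \ldots, w^{k-1}(t)\}$, where $k$ is the smallest positive integer with $w^k(t) \le t$, and define $\lambda_w(t) = w^{-\ell}(t)$, where $\ell$ is the smallest positive integer with $w^{-\ell}(t) \le t$. For a simple graph $G$ with (totally ordered) vertex set $V$, the derangement set $\mathcal{D}(G)$ is the set of permutations $w$ of $V$ such that for every vertex $t$, the vertex $\lambda_w(t)$ is adjacent in $G$ to some vertex of $\rho_w(t)$. The frequency $f(w)$ is the number of simple graphs $G$ on vertex set $V$ with $w \in \mathcal{D}(G)$, and the rate is $r(w) = f(w)/2^{\binom{|V|}{2}}$. $U(w)$ denotes the set of elements of $V$ that are not the minimal element of their $w$-cycle. *)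

theory Defs
  imports Complex_Main "HOL-Combinatorics.Permutations"
begin

definition derangement :: "'a set \<Rightarrow> ('a \<Rightarrow> 'a) \<Rightarrow> bool" where
  "derangement V w \<longleftrightarrow> w permutes V \<and> (\<forall>x\<in>V. w x \<noteq> x)"

definition rho :: "('a::linorder \<Rightarrow> 'a) \<Rightarrow> 'a \<Rightarrow> 'a set" where
  "rho w t = {(w ^^ i) t | i. i < (LEAST k. 0 < k \<and> (w ^^ k) t \<le> t)}"

definition lam :: "('a::linorder \<Rightarrow> 'a) \<Rightarrow> 'a \<Rightarrow> 'a" where
  "lam w t = ((inv w) ^^ (LEAST l. 0 < l \<and> ((inv w) ^^ l) t \<le> t)) t"

definition all_edges :: "'a set \<Rightarrow> 'a set set" where
  "all_edges V = {e. e \<subseteq> V \<and> card e = 2}"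

definition simple_graph :: "'a set \<Rightarrow> 'a set set \<Rightarrow> bool" where
  "simple_graph V E \<longleftrightarrow> E \<subseteq> all_edges V"

definition adjacent :: "'a set set \<Rightarrow> 'a \<Rightarrow> 'a \<Rightarrow> bool" where
  "adjacent E u v \<longleftrightarrow> {u, v} \<in> E"

definition derangement_set :: "'a::linorder set \<Rightarrow> 'a set set \<Rightarrow> ('a \<Rightarrow> 'a) set" where
  "derangement_set V E = {w. w permutes V \<and>
      (\<forall>t\<in>V. \<exists>x\<in>rho w t. adjacent E (lam w t) x)}"

definition freq :: "'a::linorder set \<Rightarrow> ('a \<Rightarrow> 'a) \<Rightarrow> nat" where
  "freq V w = card {E. simple_graph V E \<and> w \<in> derangement_set V E}"

definition rate :: "'a::linorder set \<Rightarrow> ('a \<Rightarrow> 'a) \<Rightarrow> real" where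
  "rate V w = real (freq V w) / 2 ^ (card V choose 2)"

definition U :: "'a::linorder set \<Rightarrow> ('a \<Rightarrow> 'a) \<Rightarrow> 'a set" where
  "U V w = {t\<in>V. \<exists>n. (w ^^ n) t < t}"

end

theory Submission
  imports Defs
begin

lemma inv_iter_cancel:
  assumes "bij p" "l \<le> m"
  shows "(inv p ^^ l) ((p ^^ m) x) = (p ^^ (m - l)) x"
  using assms(2)
proof (induction l)
  case 0 then show ?case by simp
next
  case (Suc l)
  then have "(inv p ^^ Suc l) ((p ^^ m) x) = inv p ((p ^^ (m - l)) x)" by simp
  also have "(p ^^ (m - l)) x = p ((p ^^ (m - Suc l)) x)"
    using Suc.prems by (metis Suc_diff_Suc Suc_le_lessD comp_apply funpow.simps(2))
  also have "inv p \<dots> = (p ^^ (m - Suc l)) x" using assms(1) by (simp add: bij_is_inj)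
  finally show ?case .
qed

locale fperm =
  fixes V :: "'a::linorder set" and p :: "'a \<Rightarrow> 'a"
  assumes fin: "finite V" and perm: "p permutes V"
begin

definition "Kp t = (LEAST k. 0 < k \<and> (p ^^ k) t \<le> t)"

lemma period: obtains n where "n > 0" "(p ^^ n) t = t"
  using permutation_self[of p] perm fin permutation_permutes by blast

lemma K_ex: "\<exists>k. 0 < k \<and> (p ^^ k) t \<le> t"
  using period by (metis order_refl)

lemma K_pos: "0 < Kp t" and K_le: "(p ^^ Kp t) t \<le> t"
  using LeastI_ex[OF K_ex[of t]] unfolding Kp_def by auto

lemma K_min: "0 < i \<Longrightarrow> i < Kp t \<Longrightarrow> t < (p ^^ i) t"
  using not_less_Least[of i "\<lambda>k. 0 < k \<and> (p ^^ k) t \<le> t"] unfolding Kp_def by auto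

lemma K_least: "0 < i \<Longrightarrow> (p ^^ i) t \<le> t \<Longrightarrow> Kp t \<le> i"
  unfolding Kp_def by (rule Least_le) auto

lemma iter_in: "t \<in> V \<Longrightarrow> (p ^^ n) t \<in> V"
  using permutes_in_funpow_image[OF perm] .

lemma per_mult: "(p ^^ P) t = t \<Longrightarrow> (p ^^ (P * q)) t = t"
  by (induction q) (auto simp: funpow_add funpow_mult[symmetric] simp del: funpow.simps)

lemma per_mod: "(p ^^ P) t = t \<Longrightarrow> (p ^^ n) t = (p ^^ (n mod P)) t"
proof -
  assume h: "(p ^^ P) t = t"
  have "n = n mod P + P * (n div P)" by simp
  then have "(p ^^ n) t = (p ^^ (n mod P)) ((p ^^ (P * (n div P))) t)"
    by (metis funpow_add comp_apply)
  then show ?thesis using per_mult[OF h] by simp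
qed

lemma rho_ge: "x \<in> rho p t \<Longrightarrow> t \<le> x"
  unfolding rho_def Kp_def[symmetric]
  by (auto, metis K_min gr0I funpow_0 less_imp_le order_refl)

lemma rho_sub: "t \<in> V \<Longrightarrow> rho p t \<subseteq> V"
  unfolding rho_def using iter_in by auto

end

locale drg =
  fixes V :: "'a::linorder set" and w :: "'a \<Rightarrow> 'a"
  assumes fin: "finite V" and perm: "w permutes V" and der: "\<forall>x\<in>V. w x \<noteq> x"
begin

sublocale W: fperm V w using fin perm by unfold_locales
sublocale I: fperm V "inv w" using fin permutes_inv[OF perm] by unfold_locales

lemma bijw: "bij w" using perm permutes_bij by blast
lemma invinv: "inv (inv w) = w" using bijw inv_inv_eq by blast
lemma biji: "bij (inv w)" using bijw bij_imp_bij_inv by blast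

lemma lam_eq: "lam w t = (inv w ^^ I.Kp t) t"
  by (simp add: lam_def I.Kp_def)

lemma lam_le: "lam w t \<le> t" using I.K_le lam_eq by simp

lemma U_lam_less:
  assumes "t \<in> U V w" shows "lam w t < t"
proof (rule ccontr)
  assume "\<not> lam w t < t"
  then have eq: "(inv w ^^ I.Kp t) t = t" using lam_le lam_eq by (metis order_less_le)
  have ge: "t \<le> (inv w ^^ m) t" for m
  proof -
    have "(inv w ^^ m) t = (inv w ^^ (m mod I.Kp t)) t" using I.per_mod[OF eq] .
    moreover have "m mod I.Kp t < I.Kp t" using I.K_pos by simp
    ultimately show ?thesis using I.K_min[of "m mod I.Kp t" t]
      by (cases "m mod I.Kp t = 0") auto
  qed
  from assms obtain n where n: "(w ^^ n) t < t" unfolding U_def by auto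
  have "n \<le> I.Kp t * n" using I.K_pos[of t] by simp
  have "(w ^^ n) t = (w ^^ n) ((inv w ^^ (I.Kp t * n)) t)" using I.per_mult[OF eq] by simp
  also have "\<dots> = (inv (inv w) ^^ n) ((inv w ^^ (I.Kp t * n)) t)" by (simp add: invinv)
  also have "\<dots> = (inv w ^^ (I.Kp t * n - n)) t"
    by (rule inv_iter_cancel[OF biji \<open>n \<le> I.Kp t * n\<close>])
  finally show False using ge n by (metis not_le)
qed

lemma notU_lam:
  assumes "t \<notin> U V w" "t \<in> V" shows "lam w t = t"
proof -
  obtain P where P: "P > 0" "(w ^^ P) t = t" by (rule W.period)
  have le: "I.Kp t \<le> P * I.Kp t" using P by simp
  have "(w ^^ (P * I.Kp t)) t = t" by (rule W.per_mult[OF P(2)])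
  then have "lam w t = (inv w ^^ I.Kp t) ((w ^^ (P * I.Kp t)) t)"
    using lam_eq by simp
  also have "\<dots> = (w ^^ (P * I.Kp t - I.Kp t)) t" by (rule inv_iter_cancel[OF bijw le])
  finally have "t \<le> lam w t" using assms unfolding U_def by (simp add: not_less)
  then show ?thesis using lam_le by (rule order_antisym[rotated])
qed

lemma rho_eq: "rho w t = {(w ^^ i) t | i. i < W.Kp t}"
  unfolding rho_def W.Kp_def ..

lemma notU_step:
  assumes "t \<notin> U V w" "t \<in> V"
  shows "w t \<in> U V w" "lam w (w t) = t" "rho w (w t) \<subseteq> rho w t"
proof -
  have wt: "w t \<in> V" using perm assms(2) by (simp add: permutes_in_image)
  have ge: "\<And>n. t \<le> (w ^^ n) t" using assms unfolding U_def by (simp add: not_less)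
  have "t \<le> (w ^^ 1) t" by (rule ge)
  moreover have "w t \<noteq> t" using der assms(2) by blast
  ultimately have gt: "t < w t" by (auto simp: order_less_le)
  define K where "K = W.Kp t"
  have KK: "(w ^^ K) t = t" unfolding K_def using W.K_le ge by (metis order_antisym)
  have "K \<noteq> 1" using KK gt by auto
  then have K2: "K \<ge> 2" using W.K_pos[of t] unfolding K_def by linarith
  have bk: "(w ^^ (K - 1)) (w t) = t"
  proof -
    have "(w ^^ (K - 1)) (w t) = (w ^^ Suc (K - 1)) t" by (simp only: funpow_Suc_right comp_apply)
    also have "Suc (K - 1) = K" using K2 by simp
    finally show ?thesis using KK by simp
  qed
  show "w t \<in> U V w" unfolding U_def using wt bk gt by (metis (mono_tags, lifting) mem_Collect_eq)
  have iw: "inv w (w t) = t" using bijw by (simp add: bij_is_inj)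
  have "I.Kp (w t) \<le> 1" by (rule I.K_least) (use iw gt in auto)
  then have "I.Kp (w t) = 1" using I.K_pos[of "w t"] by simp
  then show "lam w (w t) = t" using lam_eq iw by simp
  have Kw: "W.Kp (w t) \<le> K - 1" by (rule W.K_least) (use K2 bk gt in auto)
  show "rho w (w t) \<subseteq> rho w t"
  proof
    fix x assume "x \<in> rho w (w t)"
    then obtain i where i: "i < W.Kp (w t)" "x = (w ^^ i) (w t)" unfolding rho_eq by auto
    then have "x = (w ^^ Suc i) t" by (simp only: funpow_Suc_right comp_apply)
    moreover have "Suc i < W.Kp t" using i Kw K2 unfolding K_def by linarith
    ultimately show "x \<in> rho w t" unfolding rho_eq by blast
  qed
qed

lemma disj_aux:
  assumes "s \<in> U V w" "lam w t = lam w s"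
    "j < W.Kp s" "(w ^^ i) t = (w ^^ j) s" "i \<le> j"
  shows "t = s"
proof (rule ccontr)
  assume ne: "t \<noteq> s"
  define d where "d = j - i"
  have "(w ^^ i) ((w ^^ d) s) = (w ^^ (i + d)) s" by (simp add: funpow_add)
  also have "i + d = j" using assms(5) unfolding d_def by simp
  finally have "(w ^^ i) ((w ^^ d) s) = (w ^^ j) s" .
  then have "(w ^^ i) t = (w ^^ i) ((w ^^ d) s)" using assms(4) by simp
  moreover have "inj (w ^^ i)" using bijw by (simp add: bij_is_inj)
  ultimately have td: "t = (w ^^ d) s" by (simp add: inj_eq)
  then have "d \<noteq> 0" using ne by (metis funpow_0 id_apply)
  have dK: "d < W.Kp s" using assms(3) unfolding d_def by linarith
  have st: "s < t" using W.K_min[of d s] \<open>d \<noteq> 0\<close> dK td by simp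
  have "(inv w ^^ d) t = (w ^^ (d - d)) s" unfolding td by (rule inv_iter_cancel[OF bijw]) simp
  then have its: "(inv w ^^ d) t = s" by simp
  have Ld: "I.Kp t \<le> d" by (rule I.K_least) (use \<open>d \<noteq> 0\<close> its st in auto)
  have "lam w t = (inv w ^^ I.Kp t) ((w ^^ d) s)" using lam_eq td by simp
  also have "\<dots> = (w ^^ (d - I.Kp t)) s" by (rule inv_iter_cancel[OF bijw Ld])
  finally have le: "lam w t = (w ^^ (d - I.Kp t)) s" .
  have "d - I.Kp t < W.Kp s" using dK by linarith
  then have "s \<le> lam w t" unfolding le using W.K_min[of "d - I.Kp t" s]
    by (cases "d - I.Kp t = 0") auto
  moreover have "lam w s < s" by (rule U_lam_less[OF assms(1)])
  ultimately show False using assms(2) by simp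
qed

lemma disj:
  assumes "t \<in> U V w" "s \<in> U V w" "lam w t = lam w s" "b \<in> rho w t" "b \<in> rho w s"
  shows "t = s"
proof -
  obtain i where i: "i < W.Kp t" "b = (w ^^ i) t" using assms(4) unfolding rho_eq by auto
  obtain j where j: "j < W.Kp s" "b = (w ^^ j) s" using assms(5) unfolding rho_eq by auto
  show ?thesis
  proof (cases "i \<le> j")
    case True then show ?thesis using disj_aux[OF assms(2,3) j(1)] i j by simp
  next
    case False
    then have "j \<le> i" by simp
    then show ?thesis using disj_aux[OF assms(1) assms(3)[symmetric] i(1), of j] i j by simp
  qed
qed

end

lemma count_hit:
  fixes S :: "'i \<Rightarrow> 'e set"
  assumes "finite I"
  shows "finite A \<Longrightarrow> \<forall>i\<in>I. S i \<subseteq> A \<Longrightarrow> \<forall>i\<in>I. \<forall>j\<in>I. i \<noteq> j \<longrightarrow> S i \<inter> S j = {} \<Longrightarrow>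
    card {E. E \<subseteq> A \<and> (\<forall>i\<in>I. E \<inter> S i \<noteq> {})} * 2 ^ (\<Sum>i\<in>I. card (S i))
      = 2 ^ card A * (\<Prod>i\<in>I. 2 ^ card (S i) - 1)"
  using assms
proof (induction I arbitrary: A rule: finite_induct)
  case empty
  then show ?case using card_Pow[of A] by (simp add: Pow_def)
next
  case (insert j I A)
  define B where "B = A - S j"
  have finB: "finite B" using insert.prems(1) B_def by simp
  have subB: "\<forall>i\<in>I. S i \<subseteq> B"
  proof
    fix i assume i: "i \<in> I"
    then have "i \<noteq> j" using insert.hyps(2) by auto
    then have "S i \<inter> S j = {}" using insert.prems(3) i by simp
    moreover have "S i \<subseteq> A" using insert.prems(2) i by simp
    ultimately show "S i \<subseteq> B" unfolding B_def by blast
  qed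
  have dI: "\<forall>i\<in>I. \<forall>k\<in>I. i \<noteq> k \<longrightarrow> S i \<inter> S k = {}" using insert.prems(3) by blast
  define X' where "X' = {E. E \<subseteq> B \<and> (\<forall>i\<in>I. E \<inter> S i \<noteq> {})}"
  have IH: "card X' * 2 ^ (\<Sum>i\<in>I. card (S i)) = 2 ^ card B * (\<Prod>i\<in>I. 2 ^ card (S i) - 1)"
    unfolding X'_def by (rule insert.IH[OF finB subB dI])
  define X where "X = {E. E \<subseteq> A \<and> (\<forall>i\<in>insert j I. E \<inter> S i \<noteq> {})}"
  have SjA: "S j \<subseteq> A" using insert.prems(2) by simp
  have finSj: "finite (S j)" using SjA insert.prems(1) finite_subset by blast
  have Xeq: "X = (\<lambda>(Y, Z). Y \<union> Z) ` ((Pow (S j) - {{}}) \<times> X')"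
  proof
    show "X \<subseteq> (\<lambda>(Y, Z). Y \<union> Z) ` ((Pow (S j) - {{}}) \<times> X')"
    proof
      fix E assume E: "E \<in> X"
      have "(E \<inter> S j, E - S j) \<in> (Pow (S j) - {{}}) \<times> X'"
        using E subB unfolding X_def X'_def B_def by fastforce
      moreover have "E = (\<lambda>(Y, Z). Y \<union> Z) (E \<inter> S j, E - S j)" by auto
      ultimately show "E \<in> (\<lambda>(Y, Z). Y \<union> Z) ` ((Pow (S j) - {{}}) \<times> X')" by blast
    qed
  next
    show "(\<lambda>(Y, Z). Y \<union> Z) ` ((Pow (S j) - {{}}) \<times> X') \<subseteq> X"
      using SjA unfolding X_def X'_def B_def by blast
  qed
  have inj: "inj_on (\<lambda>(Y, Z). Y \<union> Z) ((Pow (S j) - {{}}) \<times> X')"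
  proof (rule inj_onI)
    fix a b
    assume a: "a \<in> (Pow (S j) - {{}}) \<times> X'" and b: "b \<in> (Pow (S j) - {{}}) \<times> X'"
      and e: "(\<lambda>(Y, Z). Y \<union> Z) a = (\<lambda>(Y, Z). Y \<union> Z) b"
    obtain Y Z where aa: "a = (Y, Z)" by (cases a)
    obtain Y' Z' where bb: "b = (Y', Z')" by (cases b)
    have h: "Y \<subseteq> S j" "Z \<in> X'" "Y' \<subseteq> S j" "Z' \<in> X'" "Y \<union> Z = Y' \<union> Z'"
      using a b e aa bb by auto
    have "Z \<inter> S j = {}" "Z' \<inter> S j = {}" using h(2,4) unfolding X'_def B_def by auto
    then have "Y = Y' \<and> Z = Z'" using h by blast
    then show "a = b" using aa bb by simp
  qed
  have cX: "card X = (2 ^ card (S j) - 1) * card X'"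
    unfolding Xeq card_image[OF inj] card_cartesian_product
    using finSj by (simp add: card_Pow card_Diff_singleton)
  have cA: "card A = card (S j) + card B"
    unfolding B_def using SjA finSj insert.prems(1) card_Diff_subset
    by (metis card_mono le_add_diff_inverse)
  have "card X * 2 ^ (\<Sum>i\<in>insert j I. card (S i))
      = (2 ^ card (S j) - 1) * 2 ^ card (S j) * (card X' * 2 ^ (\<Sum>i\<in>I. card (S i)))"
    using insert.hyps by (simp add: cX power_add)
  also have "\<dots> = (2 ^ card (S j) - 1) * 2 ^ card (S j) * (2 ^ card B * (\<Prod>i\<in>I. 2 ^ card (S i) - 1))"
    by (simp add: IH)
  also have "\<dots> = 2 ^ card A * (\<Prod>i\<in>insert j I. 2 ^ card (S i) - 1)"
    using insert.hyps by (simp add: cA power_add)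
  finally show ?case unfolding X_def .
qed


context drg begin

definition "Sed t = (\<lambda>x. {lam w t, x}) ` rho w t"

lemma U_sub: "U V w \<subseteq> V" unfolding U_def by auto

lemma lam_in: "t \<in> V \<Longrightarrow> lam w t \<in> V" using lam_eq I.iter_in by simp

lemma rho_lam: "t \<in> U V w \<Longrightarrow> x \<in> rho w t \<Longrightarrow> lam w t < x"
  using U_lam_less W.rho_ge by (meson order_less_le_trans)

lemma Sed_sub: "t \<in> U V w \<Longrightarrow> Sed t \<subseteq> all_edges V"
proof
  fix e assume t: "t \<in> U V w" and e: "e \<in> Sed t"
  then obtain x where x: "x \<in> rho w t" "e = {lam w t, x}" unfolding Sed_def by auto
  have tV: "t \<in> V" using t U_sub by auto
  have "lam w t \<noteq> x" using rho_lam[OF t x(1)] by simp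
  moreover have "x \<in> V" using W.rho_sub[OF tV] x(1) by auto
  ultimately show "e \<in> all_edges V" using x lam_in[OF tV] unfolding all_edges_def by auto
qed

lemma card_Sed: "card (Sed t) = card (rho w t)"
  unfolding Sed_def by (rule card_image) (auto simp: inj_on_def doubleton_eq_iff)

lemma Sed_disj: "t \<in> U V w \<Longrightarrow> s \<in> U V w \<Longrightarrow> t \<noteq> s \<Longrightarrow> Sed t \<inter> Sed s = {}"
proof (rule ccontr)
  assume t: "t \<in> U V w" and s: "s \<in> U V w" and ne: "t \<noteq> s" and "Sed t \<inter> Sed s \<noteq> {}"
  then obtain x y where x: "x \<in> rho w t" and y: "y \<in> rho w s" and e: "{lam w t, x} = {lam w s, y}"
    unfolding Sed_def by auto
  have "lam w t < x" "lam w s < y" using rho_lam t s x y by auto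
  then have "lam w t = lam w s \<and> x = y" using e by (auto simp: doubleton_eq_iff)
  then show False using disj[OF t s] x y ne by auto
qed

lemma freq_set:
  "{E. simple_graph V E \<and> w \<in> derangement_set V E}
   = {E. E \<subseteq> all_edges V \<and> (\<forall>t\<in>U V w. E \<inter> Sed t \<noteq> {})}"
proof -
  have hit: "E \<inter> Sed t \<noteq> {} \<longleftrightarrow> (\<exists>x\<in>rho w t. adjacent E (lam w t) x)" for E t
    unfolding Sed_def adjacent_def by auto
  have "(\<forall>t\<in>V. \<exists>x\<in>rho w t. adjacent E (lam w t) x) \<longleftrightarrow>
        (\<forall>t\<in>U V w. \<exists>x\<in>rho w t. adjacent E (lam w t) x)" for E
  proof
    assume "\<forall>t\<in>V. \<exists>x\<in>rho w t. adjacent E (lam w t) x"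
    then show "\<forall>t\<in>U V w. \<exists>x\<in>rho w t. adjacent E (lam w t) x" using U_sub by auto
  next
    assume h: "\<forall>t\<in>U V w. \<exists>x\<in>rho w t. adjacent E (lam w t) x"
    show "\<forall>t\<in>V. \<exists>x\<in>rho w t. adjacent E (lam w t) x"
    proof
      fix t assume tV: "t \<in> V"
      show "\<exists>x\<in>rho w t. adjacent E (lam w t) x"
      proof (cases "t \<in> U V w")
        case True then show ?thesis using h by auto
      next
        case False
        note st = notU_step[OF False tV]
        obtain x where "x \<in> rho w (w t)" "adjacent E (lam w (w t)) x" using h st(1) by blast
        then show ?thesis using st(2,3) notU_lam[OF False tV] by auto
      qed
    qed
  qed
  then show ?thesis
    unfolding simple_graph_def derangement_set_def using perm hit by auto
qed

lemma main_count:
  "freq V w * 2 ^ (\<Sum>t\<in>U V w. card (rho w t))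
     = 2 ^ (card V choose 2) * (\<Prod>t\<in>U V w. 2 ^ card (rho w t) - 1)"
proof -
  have finU: "finite (U V w)" using U_sub fin finite_subset by blast
  have finA: "finite (all_edges V)" unfolding all_edges_def
    by (rule rev_finite_subset[of "Pow V"]) (use fin in auto)
  have cA: "card (all_edges V) = card V choose 2"
    unfolding all_edges_def using n_subsets[OF fin, of 2] by simp
  have "card {E. E \<subseteq> all_edges V \<and> (\<forall>t\<in>U V w. E \<inter> Sed t \<noteq> {})} * 2 ^ (\<Sum>t\<in>U V w. card (Sed t))
      = 2 ^ card (all_edges V) * (\<Prod>t\<in>U V w. 2 ^ card (Sed t) - 1)"
    by (rule count_hit[OF finU finA]) (use Sed_sub Sed_disj in auto)
  then show ?thesis unfolding freq_def freq_set card_Sed cA .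
qed

end

lemma real_pow_minus1: "real ((2::nat) ^ c - 1) = 2 ^ c - 1"
  by (simp add: of_nat_diff)

theorem theorem3p5:
  fixes V :: "'a::linorder set" and w :: "'a \<Rightarrow> 'a"
  assumes "finite V" and "derangement V w"
  shows "real (freq V w) =
           (2::real) powi (int (card V choose 2) - int (\<Sum>t\<in>U V w. card (rho w t)))
           * (\<Prod>t\<in>U V w. (2::real) ^ card (rho w t) - 1)
       \<and> real (freq V w) =
           2 ^ (card V choose 2) * (\<Prod>t\<in>U V w. 1 - 1 / (2::real) ^ card (rho w t))
       \<and> rate V w = (\<Prod>t\<in>U V w. 1 - 1 / (2::real) ^ card (rho w t))"
proof -
  interpret drg V w using assms unfolding derangement_def by unfold_locales auto
  define N where "N = card V choose 2"
  define S where "S = (\<Sum>t\<in>U V w. card (rho w t))"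
  define P where "P = (\<Prod>t\<in>U V w. (2::real) ^ card (rho w t) - 1)"
  have "real (freq V w * 2 ^ S) = real (2 ^ N * (\<Prod>t\<in>U V w. 2 ^ card (rho w t) - 1))"
    using main_count unfolding N_def S_def by simp
  then have eq: "real (freq V w) * 2 ^ S = 2 ^ N * P"
    unfolding P_def by (simp add: of_nat_prod real_pow_minus1)
  have F: "real (freq V w) = 2 ^ N * P / 2 ^ S"
    using eq by (simp add: field_simps)
  have 1: "(2::real) powi (int N - int S) = 2 ^ N / 2 ^ S"
    by (simp add: power_int_diff power_int_of_nat)
  have 2: "(\<Prod>t\<in>U V w. 1 - 1 / (2::real) ^ card (rho w t)) = P / 2 ^ S"
  proof -
    have "(\<Prod>t\<in>U V w. 1 - 1 / (2::real) ^ card (rho w t))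
        = (\<Prod>t\<in>U V w. ((2::real) ^ card (rho w t) - 1) / 2 ^ card (rho w t))"
      by (rule prod.cong) (auto simp: field_simps)
    also have "\<dots> = P / (\<Prod>t\<in>U V w. (2::real) ^ card (rho w t))"
      unfolding P_def by (rule prod_dividef)
    also have "(\<Prod>t\<in>U V w. (2::real) ^ card (rho w t)) = 2 ^ S"
      unfolding S_def by (simp add: power_sum)
    finally show ?thesis .
  qed
  show ?thesis
    unfolding N_def[symmetric] S_def[symmetric] P_def[symmetric] 1 2 rate_def F
    by simp
qed

end
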